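(* Let $\mathcal V$ be a finite set, let $P_h$ and $\pi$ be probability distributions on $\mathcal V$, let $x^*\in\arg\max_{x\in\mathcal V}P_h(x)$, and let $q:=1-P_h(x^* )$. Then for every subset $A\subseteq\mathcal V$, $$\pi(A)-P_h(A)\le \max\bigl\{1-\pi(x^* ),\,q\bigr\},$$ and moreover $$1-\pi(x^* )\le \sup\Bigl\{\lambda\in[0,1]:\ d_{\mathrm{kl}}(\lambda\,\|\,q)\le D_{\mathrm{KL}}(\pi\,\|\,P_h)\Bigr\}.$$
   Context: $\pi(A)=\sum_{x\in A}\pi(x)$; $D_{\mathrm{KL}}(\pi\|P_h)=\sum_x \pi(x)\log\frac{\pi(x)}{P_h(x)}\in[0,+\infty]$. The binary KL divergence is $d_{\mathrm{kl}}(p\|q):=p\log\frac{p}{q}+(1-p)\log\frac{1-p}{1-q}$ for $p,q\in[0,1]$, with the conventions $0\log(0/q):=0$ for $q\in[0,1]$ (including $0\log(0/0)=0$) and $b\log(b/0):=+\infty$ for $b>0$. *)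

theory Defs
  imports "HOL-Analysis.Analysis" "HOL-Library.Extended_Real"
begin

definition xlogxy :: "real \<Rightarrow> real \<Rightarrow> ereal" where
  "xlogxy a b = (if a = 0 then 0 else if b = 0 then \<infinity> else ereal (a * ln (a / b)))"

definition dkl :: "real \<Rightarrow> real \<Rightarrow> ereal" where
  "dkl p q = xlogxy p q + xlogxy (1 - p) (1 - q)"

definition KL_div :: "'a set \<Rightarrow> ('a \<Rightarrow> real) \<Rightarrow> ('a \<Rightarrow> real) \<Rightarrow> ereal" where
  "KL_div V pp P = (\<Sum>x\<in>V. xlogxy (pp x) (P x))"

definition is_distribution :: "'a set \<Rightarrow> ('a \<Rightarrow> real) \<Rightarrow> bool" where
  "is_distribution V p \<longleftrightarrow> (\<forall>x\<in>V. 0 \<le> p x) \<and> (\<Sum>x\<in>V. p x) = 1"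

end

theory Submission
  imports Defs
begin

lemma term_ineq:
  fixes a b A B :: real
  assumes "0 \<le> a" "0 \<le> b" "a = 0 \<or> 0 < b" "0 < A" "0 < B"
  shows "a * ln (A / B) + a - b * A / B \<le> (if a = 0 then 0 else a * ln (a / b))"
proof (cases "a = 0")
  case True thus ?thesis using assms by simp
next
  case False
  hence a: "a > 0" "b > 0" using assms by auto
  define y where "y = b * A / (a * B)"
  have y: "y > 0" using a assms by (simp add: y_def)
  have "ln y \<le> y - 1" using ln_le_minus_one[OF y] .
  have "ln (a / b) = ln (A / B) - ln y" using a assms
    by (simp add: y_def ln_div ln_mult)
  hence "a * ln (a / b) = a * ln (A/B) - a * ln y" by (simp add: right_diff_distrib)
  moreover have "a * ln y \<le> a * (y - 1)" using \<open>ln y \<le> y - 1\<close> a by simp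
  moreover have "a * y = b * A / B" using a by (simp add: y_def)
  ultimately show ?thesis using False by (simp add: algebra_simps)
qed

lemma logsum_real:
  fixes a b :: "'a \<Rightarrow> real"
  assumes "finite B" "\<forall>x\<in>B. 0 \<le> a x" "\<forall>x\<in>B. 0 \<le> b x" "\<forall>x\<in>B. a x = 0 \<or> 0 < b x"
    "0 < sum a B" "0 < sum b B"
  shows "sum a B * ln (sum a B / sum b B) \<le> (\<Sum>x\<in>B. (if a x = 0 then 0 else a x * ln (a x / b x)))"
proof -
  let ?A = "sum a B" and ?S = "sum b B"
  have "(\<Sum>x\<in>B. a x * ln (?A / ?S) + a x - b x * ?A / ?S)
      \<le> (\<Sum>x\<in>B. (if a x = 0 then 0 else a x * ln (a x / b x)))"
    by (rule sum_mono, rule term_ineq) (use assms in auto)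
  moreover have "(\<Sum>x\<in>B. a x * ln (?A / ?S) + a x - b x * ?A / ?S)
      = ?A * ln (?A / ?S) + ?A - ?S * ?A / ?S"
    by (simp add: sum.distrib sum_subtractf sum_distrib_right sum_divide_distrib[symmetric])
  moreover have "?S * ?A / ?S = ?A" using assms by simp
  ultimately show ?thesis by simp
qed

lemma logsum:
  fixes a b :: "'a \<Rightarrow> real"
  assumes "finite B" "\<forall>x\<in>B. 0 \<le> a x" "\<forall>x\<in>B. 0 \<le> b x"
  shows "xlogxy (sum a B) (sum b B) \<le> (\<Sum>x\<in>B. xlogxy (a x) (b x))"
proof (cases "\<exists>x\<in>B. a x \<noteq> 0 \<and> b x = 0")
  case True
  then obtain x where x: "x \<in> B" "xlogxy (a x) (b x) = \<infinity>" by (auto simp: xlogxy_def)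
  have "(\<Sum>x\<in>B. xlogxy (a x) (b x)) = \<infinity>"
    unfolding sum_Pinfty using assms(1) x by blast
  thus ?thesis by simp
next
  case False
  have nz: "\<forall>x\<in>B. a x = 0 \<or> 0 < b x"
  proof
    fix x assume "x \<in> B" thus "a x = 0 \<or> 0 < b x" using False assms(3) by force
  qed
  have eq: "(\<Sum>x\<in>B. xlogxy (a x) (b x)) = ereal (\<Sum>x\<in>B. (if a x = 0 then 0 else a x * ln (a x / b x)))"
  proof -
    have "(\<Sum>x\<in>B. xlogxy (a x) (b x)) = (\<Sum>x\<in>B. ereal (if a x = 0 then 0 else a x * ln (a x / b x)))"
    proof (rule sum.cong)
      fix x assume "x \<in> B"
      hence "a x = 0 \<or> b x \<noteq> 0" using False by blast
      thus "xlogxy (a x) (b x) = ereal (if a x = 0 then 0 else a x * ln (a x / b x))"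
        unfolding xlogxy_def by (cases "a x = 0") simp_all
    qed simp
    thus ?thesis by (simp only: sum_ereal)
  qed
  show ?thesis
  proof (cases "sum a B = 0")
    case True
    have "\<forall>x\<in>B. a x = 0" using True assms(1,2) sum_nonneg_eq_0_iff by blast
    hence "(\<Sum>x\<in>B. xlogxy (a x) (b x)) = 0" by (simp add: xlogxy_def)
    thus ?thesis using True by (simp add: xlogxy_def)
  next
    case F: False
    have "sum a B \<ge> 0" using assms(2) by (simp add: sum_nonneg)
    hence A: "sum a B > 0" using F by linarith
    obtain x where x: "x \<in> B" "a x \<noteq> 0"
    proof (rule ccontr)
      assume "\<not> thesis"
      hence "\<forall>x\<in>B. a x = 0" using that by blast
      hence "sum a B = 0" by simp
      thus False using F by simp
    qed
    hence bx: "b x > 0" using nz by auto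
    have S: "sum b B > 0"
    proof (rule ccontr)
      assume "\<not> sum b B > 0"
      moreover have "sum b B \<ge> 0" using assms(3) by (simp add: sum_nonneg)
      ultimately have "sum b B = 0" by linarith
      hence "\<forall>y\<in>B. b y = 0" using assms(1,3) sum_nonneg_eq_0_iff by blast
      thus False using x bx by auto
    qed
    have "xlogxy (sum a B) (sum b B) = ereal (sum a B * ln (sum a B / sum b B))"
      using A S by (simp add: xlogxy_def)
    thus ?thesis unfolding eq using logsum_real[OF assms nz A S] by simp
  qed
qed

theorem mainTheorem2:
  fixes V :: "'a set" and Ph Pi :: "'a \<Rightarrow> real" and xstar :: 'a and q :: real
  assumes "finite V"
    and "is_distribution V Ph"
    and "is_distribution V Pi"
    and "xstar \<in> V" and "\<forall>x\<in>V. Ph x \<le> Ph xstar"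
    and "q = 1 - Ph xstar"
  shows "(\<forall>A\<subseteq>V. (\<Sum>x\<in>A. Pi x) - (\<Sum>x\<in>A. Ph x) \<le> max (1 - Pi xstar) q)
       \<and> 1 - Pi xstar \<le> Sup {l::real. 0 \<le> l \<and> l \<le> 1 \<and> dkl l q \<le> KL_div V Pi Ph}"
proof
  have Phn: "\<forall>x\<in>V. 0 \<le> Ph x" and Ph1: "sum Ph V = 1"
    and Pin: "\<forall>x\<in>V. 0 \<le> Pi x" and Pi1: "sum Pi V = 1"
    using assms(2,3) by (auto simp: is_distribution_def)
  show "\<forall>A\<subseteq>V. (\<Sum>x\<in>A. Pi x) - (\<Sum>x\<in>A. Ph x) \<le> max (1 - Pi xstar) q"
  proof (intro allI impI)
    fix A assume AV: "A \<subseteq> V"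
    have fA: "finite A" using AV assms(1) finite_subset by blast
    have "sum Pi A \<le> sum Pi V" by (rule sum_mono2[OF assms(1) AV]) (use Pin in blast)
    hence PiA: "sum Pi A \<le> 1" using Pi1 by simp
    have PhA: "0 \<le> sum Ph A" using Phn AV by (meson subsetD sum_nonneg)
    show "(\<Sum>x\<in>A. Pi x) - (\<Sum>x\<in>A. Ph x) \<le> max (1 - Pi xstar) q"
    proof (cases "xstar \<in> A")
      case True
      have "Ph xstar \<le> sum Ph A"
        by (rule member_le_sum[OF True _ fA]) (use Phn AV in blast)
      thus ?thesis using PiA assms(6) by simp
    next
      case False
      have "sum Pi (insert xstar A) \<le> 1"
        proof -
        have "insert xstar A \<subseteq> V" using AV assms(4) by blast
        hence "sum Pi (insert xstar A) \<le> sum Pi V"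
          by (rule sum_mono2[OF assms(1)]) (use Pin in blast)
        thus ?thesis using Pi1 by simp
      qed
      hence "sum Pi A \<le> 1 - Pi xstar" using False fA by simp
      thus ?thesis using PhA by simp
    qed
  qed
  let ?B = "V - {xstar}"
  have fB: "finite ?B" using assms(1) by simp
  have sPi: "sum Pi ?B = 1 - Pi xstar" using Pi1 sum_diff1[OF assms(1), of Pi xstar] assms(4) by simp
  have sPh: "sum Ph ?B = q" using Ph1 sum_diff1[OF assms(1), of Ph xstar] assms(4,6) by simp
  have KL: "KL_div V Pi Ph = xlogxy (Pi xstar) (Ph xstar) + (\<Sum>x\<in>?B. xlogxy (Pi x) (Ph x))"
    unfolding KL_div_def by (rule sum.remove[OF assms(1,4)])
  have "dkl (1 - Pi xstar) q = xlogxy (sum Pi ?B) (sum Ph ?B) + xlogxy (Pi xstar) (Ph xstar)"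
  proof -
    have e1: "1 - (1 - Pi xstar) = Pi xstar" by simp
    have e2: "1 - q = Ph xstar" using assms(6) by simp
    show ?thesis unfolding sPi sPh dkl_def e1 e2 by (rule refl)
  qed
  also have "\<dots> \<le> (\<Sum>x\<in>?B. xlogxy (Pi x) (Ph x)) + xlogxy (Pi xstar) (Ph xstar)"
    by (rule add_right_mono, rule logsum[OF fB]) (use Pin Phn in blast)+
  also have "\<dots> = KL_div V Pi Ph" unfolding KL by (rule add.commute)
  finally have D: "dkl (1 - Pi xstar) q \<le> KL_div V Pi Ph" .
  have "Pi xstar \<le> sum Pi V" by (rule member_le_sum[OF assms(4) _ assms(1)]) (use Pin in blast)
  hence le1: "Pi xstar \<le> 1" using Pi1 by simp
  have ge0: "0 \<le> Pi xstar" using Pin assms(4) by auto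
  have mem: "1 - Pi xstar \<in> {l::real. 0 \<le> l \<and> l \<le> 1 \<and> dkl l q \<le> KL_div V Pi Ph}"
  proof -
    have "0 \<le> 1 - Pi xstar" "1 - Pi xstar \<le> 1" using le1 ge0 by linarith+
    thus ?thesis unfolding mem_Collect_eq using D by blast
  qed
  have "bdd_above {l::real. 0 \<le> l \<and> l \<le> 1 \<and> dkl l q \<le> KL_div V Pi Ph}"
    by (rule bdd_aboveI[of _ 1]) auto
  thus "1 - Pi xstar \<le> Sup {l::real. 0 \<le> l \<and> l \<le> 1 \<and> dkl l q \<le> KL_div V Pi Ph}"
    by (rule cSup_upper[OF mem])
qed

end
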